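(* Consider $\bm{y}=\bm{A}\bm{x}+\bm{w}$ over $\mathbb{H}\in\{\mathbb{R},\mathbb{C}\}$, with $\bm A$ having i.i.d. entries $\mathcal{N}(0,1/m)$ (resp. $\mathcal{CN}(0,1/m)$), Gaussian noise of variance $\sigma_w^2=\delta\sigma_0^2$ ($\delta=m/n$, $\sigma_0^2>0$ constant), and signal entries i.i.d. Bernoulli-Gaussian, $p_x=(1-\epsilon)\Delta_{x=0}+\epsilon\,p_G(x;0,\sigma_x^2)$ (resp. $(1-\epsilon)\Delta_{|x|=0}+\epsilon\,p_{CG}(x;0,\sigma_x^2)$), $\epsilon\in(0,1]$, recovered by AMP with the MMSE (posterior mean) denoiser. Let $\delta^\dagger$ be the MSE-optimal measurement ratio as characterized in the context. Then $\delta^{\dagger}<2$. Moreover, if $$\sigma_x^2<\frac{\sigma_0^2}{\epsilon\left(1-R^\infty I(R^\infty,\epsilon)\right)}\ \text{(real case)},\qquad \sigma_x^2<\frac{\sigma_0^2}{\epsilon\left(1-R^\infty I_C(R^\infty,\epsilon)\right)}\ \text{(complex case)},$$ then $\delta^{\dagger}<1$.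
   Context: $p_G(x;0,s^2)$ is the real Gaussian density, $p_{CG}(x;0,s^2)=\frac{1}{\pi s^2}\exp(-|x|^2/s^2)$ the circular complex Gaussian density. For $\sigma_e>0$ let $R=\frac{\sigma_x^2}{\sigma_e^2+\sigma_x^2}$, $$I(R,\epsilon)=\int_{\mathbb{R}}\frac{\phi(x)\,x^2}{1+\frac{1-\epsilon}{\epsilon}\frac{1}{\sqrt{1-R}}\exp\!\left(-\frac{R}{1-R}\frac{x^2}{2}\right)}dx,\quad I_C(R,\epsilon)=\int_{\mathbb{C}}\frac{\phi_C(x)\,|x|^2}{1+\frac{1-\epsilon}{\epsilon}\frac{1}{1-R}\exp\!\left(-\frac{R}{1-R}|x|^2\right)}dx,$$ with $\phi$ the standard real normal density and $\phi_C=p_{CG}(\cdot;0,1)$. The state-evolution MSE of the MMSE denoiser at effective noise level $\sigma_e$ is $\mathrm{Err}(\sigma_e)=\epsilon\sigma_x^2(1-RI(R,\epsilon))$ (real) or $\epsilon\sigma_x^2(1-RI_C(R,\epsilon))$ (complex), and the state evolution is $(\sigma_e^{t+1})^2=\frac1\delta\mathrm{Err}(\sigma_e^t)+\delta\sigma_0^2$; assuming AMP converges, its fixed point $\sigma_e^\infty$ satisfies $(\sigma_e^\infty)^2=\frac1\delta\mathrm{Err}_\infty+\delta\sigma_0^2$ with $\mathrm{Err}_\infty=\mathrm{Err}(\sigma_e^\infty)$. The minimal achievable $\mathrm{Err}_\infty$ over $\delta$ is attained when $(\sigma_e^\infty)^4=4\sigma_0^2\mathrm{Err}_\infty$, and the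 optimal ratio is then $\delta^\dagger=\frac{(\sigma_e^\infty)^2}{2\sigma_0^2}$, with $\sigma_e^\infty$ the solution of this condition and $R^\infty=\frac{\sigma_x^2}{(\sigma_e^\infty)^2+\sigma_x^2}$. *)

theory Defs
  imports "HOL-Probability.Probability"
begin

definition p_CG :: "complex \<Rightarrow> real \<Rightarrow> real" where
  "p_CG x s2 = exp (- (cmod x)\<^sup>2 / s2) / (pi * s2)"

definition R_ratio :: "real \<Rightarrow> real \<Rightarrow> real" where
  "R_ratio sx2 se = sx2 / (se\<^sup>2 + sx2)"

definition I_real :: "real \<Rightarrow> real \<Rightarrow> real" where
  "I_real R eps = (LINT x|lborel. std_normal_density x * x\<^sup>2 /
      (1 + (1 - eps) / eps * (1 / sqrt (1 - R)) * exp (- (R / (1 - R)) * (x\<^sup>2 / 2))))"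

definition I_cplx :: "real \<Rightarrow> real \<Rightarrow> real" where
  "I_cplx R eps = (LINT x|(lborel :: complex measure). p_CG x 1 * (cmod x)\<^sup>2 /
      (1 + (1 - eps) / eps * (1 / (1 - R)) * exp (- (R / (1 - R)) * (cmod x)\<^sup>2)))"

text \<open>State-evolution MSE of the MMSE denoiser at effective noise level se
  (sx2 = sigma_x^2).\<close>
definition Err_real :: "real \<Rightarrow> real \<Rightarrow> real \<Rightarrow> real" where
  "Err_real sx2 eps se = eps * sx2 * (1 - R_ratio sx2 se * I_real (R_ratio sx2 se) eps)"

definition Err_cplx :: "real \<Rightarrow> real \<Rightarrow> real \<Rightarrow> real" where
  "Err_cplx sx2 eps se = eps * sx2 * (1 - R_ratio sx2 se * I_cplx (R_ratio sx2 se) eps)"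

definition delta_opt :: "real \<Rightarrow> real \<Rightarrow> real" where
  "delta_opt s02 se = se\<^sup>2 / (2 * s02)"

end

theory Submission
  imports Defs
begin


lemma gauss_real:
  fixes s :: real assumes s: "s > 0"
  shows "has_bochner_integral lborel
     (\<lambda>x. std_normal_density x * x\<^sup>2 * exp (- (1 / s\<^sup>2 - 1) * (x\<^sup>2 / 2))) (s ^ 3)"
proof -
  have eq: "std_normal_density x * x\<^sup>2 * exp (- (1 / s\<^sup>2 - 1) * (x\<^sup>2 / 2))
      = s * (normal_density 0 s x * (x - 0) ^ (2 * 1))" for x
  proof -
    have "exp (- x\<^sup>2 / 2) * exp (- (1 / s\<^sup>2 - 1) * (x\<^sup>2 / 2)) = exp (- x\<^sup>2 / (2 * s\<^sup>2))"
      unfolding exp_add[symmetric] using s by (simp add: field_simps)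
    moreover have "sqrt (2 * pi * s\<^sup>2) = s * sqrt (2 * pi)"
      using s by (simp add: real_sqrt_mult)
    ultimately show ?thesis using s
      unfolding normal_density_def by (simp add: field_simps power2_eq_square)
  qed
  have "has_bochner_integral lborel (\<lambda>x. s * (normal_density 0 s x * (x - 0) ^ (2 * 1)))
      (s * (fact (2 * 1) / ((2 / s\<^sup>2)^1 * fact 1)))"
    by (intro has_bochner_integral_mult_right normal_moment_even s)
  moreover have "s * (fact (2 * 1) / ((2 / s\<^sup>2)^1 * fact 1)) = s ^ 3"
    using s by (simp add: power2_eq_square power3_eq_cube)
  ultimately show ?thesis unfolding eq by simp
qed

lemma prod_integral:
  fixes f g :: "real \<Rightarrow> real"
  assumes f: "integrable lborel f" and g: "integrable lborel g"
  shows "integrable (lborel \<Otimes>\<^sub>M lborel) (\<lambda>p. f (fst p) * g (snd p))"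
    and "(\<integral>p. f (fst p) * g (snd p) \<partial>(lborel \<Otimes>\<^sub>M lborel)) = integral\<^sup>L lborel f * integral\<^sup>L lborel g"
proof -
  have [measurable]: "f \<in> borel_measurable lborel" "g \<in> borel_measurable lborel"
    using f g by (auto dest: borel_measurable_integrable)
  show int: "integrable (lborel \<Otimes>\<^sub>M lborel) (\<lambda>p. f (fst p) * g (snd p))"
  proof (rule lborel_pair.Fubini_integrable)
    show "(\<lambda>p. f (fst p) * g (snd p)) \<in> borel_measurable (lborel \<Otimes>\<^sub>M lborel)" by measurable
    have "integrable lborel (\<lambda>x. norm (f x) * (\<integral>y. norm (g y) \<partial>lborel))"
      using f by (intro integrable_mult_left integrable_norm)
    then show "integrable lborel (\<lambda>x. \<integral>y. norm (f (fst (x, y)) * g (snd (x, y))) \<partial>lborel)"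
      by (simp add: norm_mult abs_mult)
    show "AE x in lborel. integrable lborel (\<lambda>y. f (fst (x, y)) * g (snd (x, y)))"
      using g by (simp add: integrable_mult_right)
  qed
  have "(\<integral>p. f (fst p) * g (snd p) \<partial>(lborel \<Otimes>\<^sub>M lborel)) = (\<integral>x. (\<integral>y. f x * g y \<partial>lborel) \<partial>lborel)"
    using lborel_pair.integral_fst'[OF int] by simp
  also have "\<dots> = (\<integral>x. f x * integral\<^sup>L lborel g \<partial>lborel)" by simp
  also have "\<dots> = integral\<^sup>L lborel f * integral\<^sup>L lborel g" by simp
  finally show "(\<integral>p. f (fst p) * g (snd p) \<partial>(lborel \<Otimes>\<^sub>M lborel)) = integral\<^sup>L lborel f * integral\<^sup>L lborel g" .
qed



lemma Complex_meas[measurable]: "(\<lambda>p::real\<times>real. Complex (fst p) (snd p)) \<in> borel_measurable borel"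
proof -
  have "(\<lambda>p::real\<times>real. complex_of_real (fst p) + \<i> * complex_of_real (snd p)) \<in> borel_measurable borel"
    by (intro borel_measurable_continuous_onI continuous_intros)
  then show ?thesis by (simp add: Complex_eq)
qed

lemma lborel_complex: "distr (lborel :: (real\<times>real) measure) borel (\<lambda>p. Complex (fst p) (snd p)) = lborel"
proof (rule lborel_eqI[symmetric])
  fix l u :: complex
  assume lu: "\<And>b. b \<in> Basis \<Longrightarrow> l \<bullet> b \<le> u \<bullet> b"
  have le: "Re l \<le> Re u" "Im l \<le> Im u" using lu[of 1] lu[of \<i>] by (auto simp: Basis_complex_def)
  have pre: "(\<lambda>p. Complex (fst p) (snd p)) -` box l u = box (Re l) (Re u) \<times> box (Im l) (Im u)"
    by (auto simp: box_def Basis_complex_def)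
  have "emeasure (distr (lborel :: (real\<times>real) measure) borel (\<lambda>p. Complex (fst p) (snd p))) (box l u)
      = emeasure (lborel \<Otimes>\<^sub>M lborel) (box (Re l) (Re u) \<times> box (Im l) (Im u))"
    by (subst emeasure_distr) (auto simp: pre lborel_prod)
  also have "\<dots> = ennreal ((Re u - Re l) * (Im u - Im l))"
    using le by (simp add: lborel.emeasure_pair_measure_Times ennreal_mult)
  also have "\<dots> = ennreal (\<Prod>b\<in>Basis. (u - l) \<bullet> b)"
    by (simp add: Basis_complex_def)
  finally show "emeasure (distr (lborel :: (real\<times>real) measure) borel (\<lambda>p. Complex (fst p) (snd p))) (box l u)
      = ennreal (\<Prod>b\<in>Basis. (u - l) \<bullet> b)" .
qed simp

lemma integral_complex_pair:
  fixes f :: "complex \<Rightarrow> real"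
  assumes [measurable]: "f \<in> borel_measurable borel"
  shows "integral\<^sup>L lborel f = (\<integral>p. f (Complex (fst p) (snd p)) \<partial>(lborel \<Otimes>\<^sub>M lborel))"
    and "integrable lborel f \<longleftrightarrow> integrable (lborel \<Otimes>\<^sub>M lborel) (\<lambda>p. f (Complex (fst p) (snd p)))"
proof -
  show "integral\<^sup>L lborel f = (\<integral>p. f (Complex (fst p) (snd p)) \<partial>(lborel \<Otimes>\<^sub>M lborel))"
    by (subst lborel_complex[symmetric], subst integral_distr) (auto simp: lborel_prod)
  show "integrable lborel f \<longleftrightarrow> integrable (lborel \<Otimes>\<^sub>M lborel) (\<lambda>p. f (Complex (fst p) (snd p)))"
    by (subst lborel_complex[symmetric], subst integrable_distr_eq) (auto simp: lborel_prod)
qed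



lemma gauss_cplx:
  fixes q :: real assumes q: "q > 0"
  shows "has_bochner_integral (lborel :: complex measure)
     (\<lambda>x. p_CG x 1 * (cmod x)\<^sup>2 * exp (- (1 / q - 1) * (cmod x)\<^sup>2)) (q\<^sup>2)"
proof -
  define \<sigma> where "\<sigma> = sqrt (q / 2)"
  have \<sigma>: "\<sigma> > 0" "\<sigma>\<^sup>2 = q / 2" using q by (auto simp: \<sigma>_def)
  define N where "N = normal_density 0 \<sigma>"
  define h where "h = (\<lambda>x::complex. p_CG x 1 * (cmod x)\<^sup>2 * exp (- (1 / q - 1) * (cmod x)\<^sup>2))"
  have Nval: "N a = exp (- a\<^sup>2 / q) / sqrt (pi * q)" for a
    unfolding N_def normal_density_def using \<sigma> by (simp add: field_simps)
  have sq: "sqrt (pi * q) * sqrt (pi * q) = pi * q" using q by simp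
  have hval: "h (Complex a c) = q * ((N a * a\<^sup>2) * N c) + q * (N a * (N c * c\<^sup>2))" for a c
  proof -
    have e: "exp (- (a\<^sup>2 + c\<^sup>2)) * exp (- (1 / q - 1) * (a\<^sup>2 + c\<^sup>2)) = exp (- a\<^sup>2 / q) * exp (- c\<^sup>2 / q)"
      unfolding exp_add[symmetric] using q by (simp add: field_simps)
    have "h (Complex a c) = exp (- (a\<^sup>2 + c\<^sup>2)) * exp (- (1 / q - 1) * (a\<^sup>2 + c\<^sup>2)) * (a\<^sup>2 + c\<^sup>2) / pi"
      unfolding h_def p_CG_def by (simp add: complex_norm)
    also have "\<dots> = exp (- a\<^sup>2 / q) * exp (- c\<^sup>2 / q) * (a\<^sup>2 + c\<^sup>2) / pi" by (simp only: e)
    also have "\<dots> = q * (N a * N c) * (a\<^sup>2 + c\<^sup>2)"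
      unfolding Nval using q sq by (simp add: field_simps)
    finally show ?thesis by (simp add: algebra_simps)
  qed
  have m2: "has_bochner_integral lborel (\<lambda>x. N x * x\<^sup>2) (\<sigma>\<^sup>2)"
    using normal_moment_even[OF \<sigma>(1), of 0 1] unfolding N_def by (simp add: power2_eq_square)
  have m0: "integrable lborel N" "integral\<^sup>L lborel N = 1" unfolding N_def using \<sigma>(1) by (auto intro: integrable_normal_density integral_normal_density)
  have i2: "integrable lborel (\<lambda>x. N x * x\<^sup>2)" "integral\<^sup>L lborel (\<lambda>x. N x * x\<^sup>2) = \<sigma>\<^sup>2"
    using m2 by (auto simp: has_bochner_integral_iff)
  note P1 = prod_integral[OF i2(1) m0(1)]
  note P2 = prod_integral[OF m0(1) i2(1)]
  have [measurable]: "h \<in> borel_measurable borel" unfolding h_def p_CG_def by measurable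
  have F: "(\<lambda>p. h (Complex (fst p) (snd p))) = (\<lambda>p. q * ((N (fst p) * (fst p)\<^sup>2) * N (snd p)) + q * (N (fst p) * (N (snd p) * (snd p)\<^sup>2)))"
    by (simp add: hval)
  have intF: "integrable (lborel \<Otimes>\<^sub>M lborel) (\<lambda>p. h (Complex (fst p) (snd p)))"
    unfolding F by (intro Bochner_Integration.integrable_add Bochner_Integration.integrable_mult_right P1(1) P2(1))
  have valF: "(\<integral>p. h (Complex (fst p) (snd p)) \<partial>(lborel \<Otimes>\<^sub>M lborel)) = q\<^sup>2"
    unfolding F using P1 P2 i2 m0 \<sigma> by (simp add: power2_eq_square)
  have "integrable lborel h" using intF integral_complex_pair(2) by simp
  moreover have "integral\<^sup>L lborel h = q\<^sup>2" using valF integral_complex_pair(1) by simp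
  ultimately show ?thesis unfolding h_def[symmetric] by (simp add: has_bochner_integral_iff)
qed


lemma lower_bound:
  fixes M :: "'a measure" and g E :: "'a \<Rightarrow> real" and c m :: real
  assumes [measurable]: "g \<in> borel_measurable M" "E \<in> borel_measurable M"
    and g0: "\<And>x. 0 \<le> g x" and E0: "\<And>x. 0 \<le> E x" and c: "c \<ge> 0"
    and h1: "has_bochner_integral M g 1" and h2: "has_bochner_integral M (\<lambda>x. g x * E x) m"
  shows "1 - c * m \<le> (\<integral>x. g x / (1 + c * E x) \<partial>M)"
proof -
  have ig: "integrable M g" "integral\<^sup>L M g = 1" using h1 by (auto simp: has_bochner_integral_iff)
  have igE: "integrable M (\<lambda>x. g x * E x)" "integral\<^sup>L M (\<lambda>x. g x * E x) = m"
    using h2 by (auto simp: has_bochner_integral_iff)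
  have D1: "1 \<le> 1 + c * E x" for x using c E0[of x] by simp
  have int: "integrable M (\<lambda>x. g x / (1 + c * E x))"
  proof (rule Bochner_Integration.integrable_bound[OF ig(1)])
    show "(\<lambda>x. g x / (1 + c * E x)) \<in> borel_measurable M" by measurable
    show "AE x in M. norm (g x / (1 + c * E x)) \<le> norm (g x)"
    proof (rule AE_I2)
      fix x
      have "g x * 1 \<le> g x * (1 + c * E x)" by (rule mult_left_mono[OF D1 g0])
      then have "g x / (1 + c * E x) \<le> g x" using D1[of x] by (simp add: divide_le_eq)
      then show "norm (g x / (1 + c * E x)) \<le> norm (g x)" using D1[of x] g0[of x] by simp
    qed
  qed
  have int2: "integrable M (\<lambda>x. g x - c * (g x * E x))"
    using ig(1) igE(1) by (intro Bochner_Integration.integrable_diff Bochner_Integration.integrable_mult_right)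
  have pw: "g x - c * (g x * E x) \<le> g x / (1 + c * E x)" for x
  proof -
    have "(g x - c * (g x * E x)) * (1 + c * E x) = g x - g x * (c * E x)\<^sup>2"
      by (simp add: algebra_simps power2_eq_square)
    also have "\<dots> \<le> g x" using g0[of x] by simp
    finally show ?thesis using D1[of x] by (simp add: le_divide_eq)
  qed
  have "(\<integral>x. g x - c * (g x * E x) \<partial>M) \<le> (\<integral>x. g x / (1 + c * E x) \<partial>M)"
    by (rule integral_mono[OF int2 int pw])
  moreover have "(\<integral>x. g x - c * (g x * E x) \<partial>M) = 1 - c * m"
    using ig igE int2 by (simp add: Bochner_Integration.integral_diff)
  ultimately show ?thesis by simp
qed


lemma arith_bound:
  fixes sx2 se eps R I :: real
  assumes "sx2 > 0" "se > 0" "0 < eps" "eps \<le> 1" and R: "R = sx2 / (se\<^sup>2 + sx2)"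
    and I: "1 - (1 - eps) / eps * (1 - R) \<le> I"
  shows "eps * sx2 * (1 - R * I) < se\<^sup>2"
proof -
  have se2: "se\<^sup>2 > 0" using assms by simp
  have d: "se\<^sup>2 + sx2 > 0" using se2 assms by linarith
  have R0: "0 < R" "R < 1" unfolding R using assms se2 d by (simp_all add: divide_less_eq)
  have d2: "sx2 + se\<^sup>2 \<noteq> 0" "se\<^sup>2 + sx2 \<noteq> 0" using d by auto
  have oneR: "sx2 * (1 - R) = R * se\<^sup>2" unfolding R using d2 by (simp add: field_simps)
  have "R * (1 - (1 - eps) / eps * (1 - R)) \<le> R * I" using I R0 by (simp add: mult_left_mono)
  then have "eps * sx2 * (1 - R * I) \<le> eps * sx2 * (1 - R * (1 - (1 - eps) / eps * (1 - R)))"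
    using assms(1,3) by (intro mult_left_mono) auto
  also have "\<dots> = sx2 * (1 - R) * (eps + R * (1 - eps))"
    using assms(3) by (simp add: field_simps)
  also have "\<dots> = R * se\<^sup>2 * (eps + R * (1 - eps))" by (simp add: oneR)
  also have "\<dots> \<le> R * se\<^sup>2 * 1"
  proof -
    have "R * (1 - eps) \<le> 1 * (1 - eps)" using R0 assms by (intro mult_right_mono) auto
    then have "eps + R * (1 - eps) \<le> 1" by simp
    then show ?thesis using R0 se2 by (intro mult_left_mono) auto
  qed
  also have "\<dots> < se\<^sup>2" using R0 se2 by simp
  finally show ?thesis .
qed


lemma fin:
  fixes se s02 sx2 eps D :: real
  assumes "se > 0" "s02 > 0" "sx2 > 0" "eps > 0" and eq: "se ^ 4 = 4 * s02 * (eps * sx2 * D)"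
    and lt: "eps * sx2 * D < se\<^sup>2"
  shows "se\<^sup>2 / (2 * s02) < 2 \<and> (sx2 < s02 / (eps * D) \<longrightarrow> se\<^sup>2 / (2 * s02) < 1)"
proof
  define u where "u = se\<^sup>2"
  define E where "E = eps * sx2 * D"
  have u0: "u > 0" using assms by (simp add: u_def)
  have s4: "se ^ 4 = u * u" unfolding u_def by (subst power_add[symmetric]) simp
  have eqE: "u * u = 4 * s02 * E" using eq s4 by (simp add: E_def)
  have ltE: "E < u" using lt by (simp add: E_def u_def)
  have "4 * s02 * E < 4 * s02 * u" using ltE assms(2) by simp
  then have "u * u < (4 * s02) * u" using eqE by simp
  then have "u < 4 * s02" using u0 by simp
  then show "se\<^sup>2 / (2 * s02) < 2" using assms(2) by (simp add: u_def[symmetric] divide_less_eq)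
  show "sx2 < s02 / (eps * D) \<longrightarrow> se\<^sup>2 / (2 * s02) < 1"
  proof
    assume h: "sx2 < s02 / (eps * D)"
    have "0 < u * u" using u0 by simp
    then have "E > 0" using eqE assms(2) by (simp add: zero_less_mult_iff)
    then have "eps * D > 0" using assms(3) unfolding E_def by (simp add: zero_less_mult_iff mult.assoc mult.left_commute[of eps])
    then have "sx2 * (eps * D) < s02" using h by (simp add: less_divide_eq)
    then have "E < s02" unfolding E_def by (simp add: algebra_simps)
    then have "4 * s02 * E < 4 * s02 * s02" using assms(2) by simp
    then have "u\<^sup>2 < (2 * s02)\<^sup>2" using eqE by (simp add: power2_eq_square)
    then have "u < 2 * s02" by (rule power_less_imp_less_base) (use assms(2) in simp)
    then show "se\<^sup>2 / (2 * s02) < 1" using assms(2) by (simp add: u_def[symmetric] divide_less_eq)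
  qed
qed

lemma real_part:
  fixes sx2 s02 eps se :: real
  assumes "sx2 > 0" and "s02 > 0" and "0 < eps" and "eps \<le> 1"
    and se: "se > 0" and eq: "se ^ 4 = 4 * s02 * Err_real sx2 eps se"
  shows "delta_opt s02 se < 2 \<and>
        (sx2 < s02 / (eps * (1 - R_ratio sx2 se * I_real (R_ratio sx2 se) eps))
           \<longrightarrow> delta_opt s02 se < 1)"
proof -
  define R where "R = R_ratio sx2 se"
  have Rdef: "R = sx2 / (se\<^sup>2 + sx2)" unfolding R_def R_ratio_def ..
  have se2: "se\<^sup>2 > 0" using se by simp
  have d: "se\<^sup>2 + sx2 > 0" using se2 assms by linarith
  have R0: "0 < R" "R < 1" unfolding Rdef using assms se2 d by (simp_all add: divide_less_eq)
  define s where "s = sqrt (1 - R)"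
  have s0: "s > 0" "s\<^sup>2 = 1 - R" using R0 by (auto simp: s_def)
  define c where "c = (1 - eps) / eps * (1 / sqrt (1 - R))"
  have c0: "c \<ge> 0" unfolding c_def using assms R0 by simp
  have h1: "has_bochner_integral lborel (\<lambda>x. std_normal_density x * x\<^sup>2) 1"
    using std_normal_moment_even[of 1] by (simp add: power2_eq_square)
  have ex: "(1 / s\<^sup>2 - 1) = R / (1 - R)" using s0 R0 by (simp add: field_simps)
  have h2: "has_bochner_integral lborel (\<lambda>x. std_normal_density x * x\<^sup>2 * exp (- (R / (1 - R)) * (x\<^sup>2 / 2))) (s ^ 3)"
    using gauss_real[OF s0(1)] unfolding ex .
  have "1 - c * s ^ 3 \<le> (\<integral>x. std_normal_density x * x\<^sup>2 / (1 + c * exp (- (R / (1 - R)) * (x\<^sup>2 / 2))) \<partial>lborel)"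
    by (rule lower_bound[OF _ _ _ _ c0 h1 h2]) (auto simp: normal_density_def)
  then have I: "1 - c * s ^ 3 \<le> I_real R eps" unfolding I_real_def c_def by simp
  have "c * s ^ 3 = (1 - eps) / eps * s\<^sup>2"
    unfolding c_def s_def[symmetric] using s0(1) assms(3) by (simp add: power3_eq_cube power2_eq_square field_simps)
  then have "c * s ^ 3 = (1 - eps) / eps * (1 - R)" using s0(2) by simp
  with I have I': "1 - (1 - eps) / eps * (1 - R) \<le> I_real R eps" by simp
  have lt: "eps * sx2 * (1 - R * I_real R eps) < se\<^sup>2"
    by (rule arith_bound[OF assms(1) se assms(3,4) Rdef I'])
  have eq': "se ^ 4 = 4 * s02 * (eps * sx2 * (1 - R * I_real R eps))"
    using eq unfolding Err_real_def R_def .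
  show ?thesis using fin[OF se assms(2,1,3) eq' lt] unfolding delta_opt_def R_def .
qed

lemma cplx_part:
  fixes sx2 s02 eps se :: real
  assumes "sx2 > 0" and "s02 > 0" and "0 < eps" and "eps \<le> 1"
    and se: "se > 0" and eq: "se ^ 4 = 4 * s02 * Err_cplx sx2 eps se"
  shows "delta_opt s02 se < 2 \<and>
        (sx2 < s02 / (eps * (1 - R_ratio sx2 se * I_cplx (R_ratio sx2 se) eps))
           \<longrightarrow> delta_opt s02 se < 1)"
proof -
  define R where "R = R_ratio sx2 se"
  have Rdef: "R = sx2 / (se\<^sup>2 + sx2)" unfolding R_def R_ratio_def ..
  have se2: "se\<^sup>2 > 0" using se by simp
  have d: "se\<^sup>2 + sx2 > 0" using se2 assms by linarith
  have R0: "0 < R" "R < 1" unfolding Rdef using assms se2 d by (simp_all add: divide_less_eq)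
  define q where "q = 1 - R"
  have q0: "q > 0" using R0 by (simp add: q_def)
  define c where "c = (1 - eps) / eps * (1 / (1 - R))"
  have c0: "c \<ge> 0" unfolding c_def using assms R0 by simp
  have h1: "has_bochner_integral (lborel :: complex measure) (\<lambda>x. p_CG x 1 * (cmod x)\<^sup>2) 1"
    using gauss_cplx[of 1] by simp
  have ex: "(1 / q - 1) = R / (1 - R)" using q0 R0 by (simp add: q_def field_simps)
  have h2: "has_bochner_integral (lborel :: complex measure) (\<lambda>x. p_CG x 1 * (cmod x)\<^sup>2 * exp (- (R / (1 - R)) * (cmod x)\<^sup>2)) (q\<^sup>2)"
    using gauss_cplx[OF q0] unfolding ex .
  have "1 - c * q\<^sup>2 \<le> (\<integral>x. p_CG x 1 * (cmod x)\<^sup>2 / (1 + c * exp (- (R / (1 - R)) * (cmod x)\<^sup>2)) \<partial>(lborel :: complex measure))"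
    by (rule lower_bound[OF _ _ _ _ c0 h1 h2]) (auto simp: p_CG_def)
  then have I: "1 - c * q\<^sup>2 \<le> I_cplx R eps" unfolding I_cplx_def c_def by simp
  have "c * q\<^sup>2 = (1 - eps) / eps * (1 - R)"
    unfolding c_def q_def[symmetric] using q0 assms(3) by (simp add: power2_eq_square field_simps)
  with I have I': "1 - (1 - eps) / eps * (1 - R) \<le> I_cplx R eps" by simp
  have lt: "eps * sx2 * (1 - R * I_cplx R eps) < se\<^sup>2"
    by (rule arith_bound[OF assms(1) se assms(3,4) Rdef I'])
  have eq': "se ^ 4 = 4 * s02 * (eps * sx2 * (1 - R * I_cplx R eps))"
    using eq unfolding Err_cplx_def R_def .
  show ?thesis using fin[OF se assms(2,1,3) eq' lt] unfolding delta_opt_def R_def .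
qed

theorem proposition3:
  fixes sx2 s02 eps :: real
  assumes "sx2 > 0" and "s02 > 0" and "0 < eps" and "eps \<le> 1"
  shows
   "(\<forall>se. se > 0 \<and> se ^ 4 = 4 * s02 * Err_real sx2 eps se \<longrightarrow>
        delta_opt s02 se < 2 \<and>
        (sx2 < s02 / (eps * (1 - R_ratio sx2 se * I_real (R_ratio sx2 se) eps))
           \<longrightarrow> delta_opt s02 se < 1))
    \<and>
    (\<forall>se. se > 0 \<and> se ^ 4 = 4 * s02 * Err_cplx sx2 eps se \<longrightarrow>
        delta_opt s02 se < 2 \<and>
        (sx2 < s02 / (eps * (1 - R_ratio sx2 se * I_cplx (R_ratio sx2 se) eps))
           \<longrightarrow> delta_opt s02 se < 1))"
  using real_part[OF assms] cplx_part[OF assms] by blast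

end
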